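(* Let $D=\operatorname{diag}(d_1,\dots,d_n)$ with $d_i>0$, $Q=\operatorname{diag}(q_1,\dots,q_n)$ with $q_i>0$, $1\le p\le\infty$, and $L\in\mathbb{R}^{N\times N}$ symmetric with $L\mathbf{1}=0$. Then $\mu_{p,Q}(-L\otimes D)=\mu_p(-L\otimes D)$.
   Context: On $\mathbb{R}^{nN}$, with $u=(u_1^T,\dots,u_N^T)^T$, $u_i\in\mathbb{R}^n$, define $\|u\|_{p,Q}=\big\|(\|Qu_1\|_p,\dots,\|Qu_N\|_p)^T\big\|_p$. For a norm $\|\cdot\|$, the induced logarithmic norm is $\mu(A)=\lim_{h\to0^+}\frac1h(\|I+hA\|-1)$ with the induced operator norm; $\mu_{p,Q}$ and $\mu_p$ are those induced by $\|\cdot\|_{p,Q}$ and the standard $p$-norm on $\mathbb{R}^{nN}$. *)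

theory Defs
  imports "HOL-Analysis.Analysis"
begin

text \<open>Vectors of R^{nN} are represented as u :: real^'n^'N, with block u $ i \<in> R^n
  (i ranges over the N blocks, k over the n components). p ranges over [1, \<infinity>] as an ereal.\<close>

definition pnormv :: "ereal \<Rightarrow> ('a::finite \<Rightarrow> real) \<Rightarrow> real" where
  "pnormv p f = (if p = \<infinity> then Max (range (\<lambda>i. \<bar>f i\<bar>))
                 else (\<Sum>i\<in>UNIV. \<bar>f i\<bar> powr real_of_ereal p) powr (1 / real_of_ereal p))"

definition std_pnorm :: "ereal \<Rightarrow> real^'n::finite^'N::finite \<Rightarrow> real" where
  "std_pnorm p u = pnormv p (\<lambda>(i, k). u $ i $ k)"

definition pQ_norm :: "ereal \<Rightarrow> real^'n::finite \<Rightarrow> real^'n^'N::finite \<Rightarrow> real" where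
  "pQ_norm p q u = pnormv p (\<lambda>i. pnormv p (\<lambda>k. q $ k * u $ i $ k))"

definition op_norm :: "('v \<Rightarrow> real) \<Rightarrow> ('v \<Rightarrow> 'v) \<Rightarrow> real" where
  "op_norm nrm A = (SUP x\<in>{x. nrm x = 1}. nrm (A x))"

definition log_norm :: "('v::real_vector \<Rightarrow> real) \<Rightarrow> ('v \<Rightarrow> 'v) \<Rightarrow> real" where
  "log_norm nrm A = Lim (at_right 0) (\<lambda>h. (op_norm nrm (\<lambda>x. x + h *\<^sub>R A x) - 1) / h)"

definition negLkronD :: "real^'N::finite^'N \<Rightarrow> real^'n::finite \<Rightarrow> real^'n^'N \<Rightarrow> real^'n^'N" where
  "negLkronD L d u = (\<chi> i. \<chi> k. - (\<Sum>j\<in>UNIV. L $ i $ j * d $ k * u $ j $ k))"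

end

theory Submission
  imports Defs
begin

lemma pnormv_nested:
  fixes g :: "'a::finite \<Rightarrow> 'b::finite \<Rightarrow> real"
  assumes "1 \<le> p"
  shows "pnormv p (\<lambda>i. pnormv p (\<lambda>k. g i k)) = pnormv p (\<lambda>(i, k). g i k)"
proof (cases "p = \<infinity>")
  case True
  have nn: "\<And>i. Max (range (\<lambda>k. \<bar>g i k\<bar>)) \<ge> 0"
  proof -
    fix i
    have "\<bar>g i undefined\<bar> \<le> Max (range (\<lambda>k. \<bar>g i k\<bar>))" by simp
    then show "Max (range (\<lambda>k. \<bar>g i k\<bar>)) \<ge> 0" using abs_ge_zero order_trans by blast
  qed
  have "Max (range (\<lambda>i. \<bar>Max (range (\<lambda>k. \<bar>g i k\<bar>))\<bar>)) = Max (range (\<lambda>(i, k). \<bar>g i k\<bar>))"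
  proof (rule antisym)
    show "Max (range (\<lambda>i. \<bar>Max (range (\<lambda>k. \<bar>g i k\<bar>))\<bar>)) \<le> Max (range (\<lambda>(i, k). \<bar>g i k\<bar>))"
    proof (rule Max.boundedI)
      show "finite (range (\<lambda>i. \<bar>Max (range (\<lambda>k. \<bar>g i k\<bar>))\<bar>))" by simp
      show "range (\<lambda>i. \<bar>Max (range (\<lambda>k. \<bar>g i k\<bar>))\<bar>) \<noteq> {}" by simp
      fix a assume "a \<in> range (\<lambda>i. \<bar>Max (range (\<lambda>k. \<bar>g i k\<bar>))\<bar>)"
      then obtain i where a: "a = Max (range (\<lambda>k. \<bar>g i k\<bar>))" using nn by auto
      show "a \<le> Max (range (\<lambda>(i, k). \<bar>g i k\<bar>))" unfolding a
      proof (rule Max.boundedI)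
        fix b assume "b \<in> range (\<lambda>k. \<bar>g i k\<bar>)"
        then obtain k where "b = \<bar>g i k\<bar>" by auto
        then have "b \<in> range (\<lambda>(i, k). \<bar>g i k\<bar>)" by (auto intro!: image_eqI[of _ _ "(i,k)"])
        then show "b \<le> Max (range (\<lambda>(i, k). \<bar>g i k\<bar>))" by simp
      qed auto
    qed
    show "Max (range (\<lambda>(i, k). \<bar>g i k\<bar>)) \<le> Max (range (\<lambda>i. \<bar>Max (range (\<lambda>k. \<bar>g i k\<bar>))\<bar>))"
    proof (rule Max.boundedI)
      fix b assume "b \<in> range (\<lambda>(i, k). \<bar>g i k\<bar>)"
      then obtain i k where b: "b = \<bar>g i k\<bar>" by auto
      have "b \<le> Max (range (\<lambda>k. \<bar>g i k\<bar>))" unfolding b by simp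
      also have "\<dots> = \<bar>Max (range (\<lambda>k. \<bar>g i k\<bar>))\<bar>" using nn[of i] by simp
      also have "\<dots> \<le> Max (range (\<lambda>i. \<bar>Max (range (\<lambda>k. \<bar>g i k\<bar>))\<bar>))" by simp
      finally show "b \<le> Max (range (\<lambda>i. \<bar>Max (range (\<lambda>k. \<bar>g i k\<bar>))\<bar>))" .
    qed auto
  qed
  then show ?thesis using True unfolding pnormv_def by (simp add: case_prod_beta)
next
  case False
  define r where "r = real_of_ereal p"
  have r1: "r \<ge> 1" using assms False unfolding r_def
    by (cases p) auto
  have "\<And>i. \<bar>(\<Sum>k\<in>UNIV. \<bar>g i k\<bar> powr r) powr (1 / r)\<bar> powr r = (\<Sum>k\<in>UNIV. \<bar>g i k\<bar> powr r)"
  proof -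
    fix i
    have nn: "(\<Sum>k\<in>UNIV. \<bar>g i k\<bar> powr r) \<ge> 0" by (simp add: sum_nonneg)
    have "\<bar>(\<Sum>k\<in>UNIV. \<bar>g i k\<bar> powr r) powr (1 / r)\<bar> powr r = ((\<Sum>k\<in>UNIV. \<bar>g i k\<bar> powr r) powr (1 / r)) powr r"
      by simp
    also have "\<dots> = (\<Sum>k\<in>UNIV. \<bar>g i k\<bar> powr r)" using r1 nn by (simp add: powr_powr)
    finally show "\<bar>(\<Sum>k\<in>UNIV. \<bar>g i k\<bar> powr r) powr (1 / r)\<bar> powr r = (\<Sum>k\<in>UNIV. \<bar>g i k\<bar> powr r)" .
  qed
  moreover have "(\<Sum>i\<in>UNIV. \<Sum>k\<in>UNIV. \<bar>g i k\<bar> powr r) = (\<Sum>x\<in>UNIV. (case x of (i, k) \<Rightarrow> \<bar>g i k\<bar> powr r))"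
    using sum.cartesian_product[of "\<lambda>i k. \<bar>g i k\<bar> powr r" UNIV UNIV] by (simp only: UNIV_Times_UNIV)
  moreover have "(\<Sum>x\<in>UNIV. \<bar>case x of (i, k) \<Rightarrow> g i k\<bar> powr r) = (\<Sum>x\<in>UNIV. case x of (i, k) \<Rightarrow> \<bar>g i k\<bar> powr r)"
    by (rule sum.cong) (auto split: prod.splits)
  ultimately show ?thesis using False unfolding pnormv_def r_def[symmetric]
    by simp
qed

theorem lemma10:
  fixes L :: "real^'N::finite^'N" and d q :: "real^'n::finite" and p :: ereal
  assumes "\<And>k. d $ k > 0" and "\<And>k. q $ k > 0"
    and "1 \<le> p"
    and "transpose L = L" and "L *v (\<chi> j. 1) = 0"
  shows "log_norm (pQ_norm p q) (negLkronD L d) = log_norm (std_pnorm p) (negLkronD L d)"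
proof -
  define S :: "real^'n^'N \<Rightarrow> real^'n^'N" where "S u = (\<chi> i. \<chi> k. q $ k * u $ i $ k)" for u
  define T :: "real^'n^'N \<Rightarrow> real^'n^'N" where "T u = (\<chi> i. \<chi> k. u $ i $ k / q $ k)" for u
  let ?A = "negLkronD L d"
  have qnz: "\<And>k. q $ k \<noteq> 0" using assms(2) by (metis less_irrefl)
  have ST: "S (T y) = y" for y using qnz by (simp add: S_def T_def vec_eq_iff)
  have nrm: "pQ_norm p q u = std_pnorm p (S u)" for u
  proof -
    have "(\<lambda>(i, k). S u $ i $ k) = (\<lambda>(i, k). q $ k * u $ i $ k)" by (simp add: S_def)
    then show ?thesis unfolding pQ_norm_def std_pnorm_def
      using pnormv_nested[OF assms(3), of "\<lambda>i k. q $ k * u $ i $ k"] by simp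
  qed
  have SA: "S (?A x) = ?A (S x)" for x
    by (simp add: S_def negLkronD_def vec_eq_iff sum_distrib_left mult.commute mult.left_commute)
  have Slin: "S (x + h *\<^sub>R y) = S x + h *\<^sub>R S y" for x y h
    by (simp add: S_def vec_eq_iff algebra_simps)
  have op: "op_norm (pQ_norm p q) (\<lambda>x. x + h *\<^sub>R ?A x) = op_norm (std_pnorm p) (\<lambda>x. x + h *\<^sub>R ?A x)" for h
  proof -
    have "op_norm (pQ_norm p q) (\<lambda>x. x + h *\<^sub>R ?A x)
        = (SUP x\<in>{x. std_pnorm p (S x) = 1}. std_pnorm p (S x + h *\<^sub>R ?A (S x)))"
      unfolding op_norm_def nrm Slin SA ..
    also have "\<dots> = (SUP y\<in>S ` {x. std_pnorm p (S x) = 1}. std_pnorm p (y + h *\<^sub>R ?A y))"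
      by (simp add: image_image)
    also have "S ` {x. std_pnorm p (S x) = 1} = {y. std_pnorm p y = 1}"
    proof
      show "S ` {x. std_pnorm p (S x) = 1} \<subseteq> {y. std_pnorm p y = 1}" by auto
      show "{y. std_pnorm p y = 1} \<subseteq> S ` {x. std_pnorm p (S x) = 1}"
      proof
        fix y :: "real^'n^'N" assume "y \<in> {y. std_pnorm p y = 1}"
        then show "y \<in> S ` {x. std_pnorm p (S x) = 1}"
          using ST[of y] by (metis (mono_tags, lifting) image_eqI mem_Collect_eq)
      qed
    qed
    finally show ?thesis unfolding op_norm_def .
  qed
  show ?thesis unfolding log_norm_def op ..
qed

end
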